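(* Fix $c\in(0,1)$, let $S:=[-1,-c)\cup(c,1]$, and for $f\in L^1_{\mathrm{loc}}(\mathbb{R})$ let $Kf(\gamma):=\int_{\mathbb{R}} f(t)\,\chi_S(\gamma/|t|)\,dt$. Define $h_1:=\chi_S$ and, for $n\ge2$, $h_n:=Kh_{n-1}$, i.e. $$h_n(\gamma)=\int_{\mathbb{R}} h_{n-1}(t)\,\chi_S\Big(\frac{\gamma}{|t|}\Big)\,dt,\qquad\gamma\in\mathbb{R}.$$ Let $Q_n:=\int_{\mathbb{R}} h_n(\gamma)\,d\gamma$. Then the functions $h_n$, $n\in\mathbb{N}$, have the following properties: (i) $h_n$ is a spline (piecewise polynomial) with knots at the points $\pm c^n,\pm c^{n-1},\dots,\pm1$. (ii) $h_n$ is even. (iii) For $n\ge2$, $h_n\in C^{n-2}(\mathbb{R})$. (iv) $\operatorname{supp} h_n=[-1,-c^n]\cup[c^n,1]$ and $h_n>0$ on $(-1,-c^n)\cup(c^n,1)$. (v) $Q_n>0$ for all $n\in\mathbb{N}$, and $Q_1=2(1-c)$. (vi) For $n\ge2$, $\dfrac{1}{Q_{n-1}}\sum_{j\in\mathbb{Z}} h_n(c^j\gamma)=1$ for all $\gamma\in\mathbb{R}\setminus\{0\}$. (vii) For $n\ge2$, there exists a constant $C>0$ such that $C\le \dfrac{1}{Q_{n-1}^2}\sum_{j\in\mathbb{Z}}|h_n(c^j\gamma)|^2\le1$ for all $\gamma\in\mathbb{R}\setminus\{0\}$. (viii) For $n\ge2$, $$h_n(\gamma)=\frac{2}{n-1}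\Big[(1-|\gamma|)\,h_{n-1}(\gamma)+(c^{-1}|\gamma|-c^{n-1})\,h_{n-1}(c^{-1}\gamma)\Big],\qquad\gamma\in\mathbb{R}.$$
   Context: $\chi_S$ denotes the indicator function of $S$. *)

theory Defs
  imports "HOL-Analysis.Analysis" "HOL-Computational_Algebra.Polynomial"
begin

definition Sset :: "real \<Rightarrow> real set" where
  "Sset c = {-1..<-c} \<union> {c<..1}"

definition Kop :: "real \<Rightarrow> (real \<Rightarrow> real) \<Rightarrow> real \<Rightarrow> real" where
  "Kop c f \<gamma> = (\<integral>t. f t * indicator (Sset c) (\<gamma> / \<bar>t\<bar>) \<partial>lborel)"

text \<open>h_1 = chi_S, h_(n+1) = K h_n. The index 0 is a dummy (set equal to h_1) and never used.\<close>
fun hseq :: "real \<Rightarrow> nat \<Rightarrow> real \<Rightarrow> real" where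
  "hseq c 0 = indicator (Sset c)"
| "hseq c (Suc 0) = indicator (Sset c)"
| "hseq c (Suc (Suc n)) = Kop c (hseq c (Suc n))"

definition Qn :: "real \<Rightarrow> nat \<Rightarrow> real" where
  "Qn c n = (\<integral>\<gamma>. hseq c n \<gamma> \<partial>lborel)"

definition knots :: "real \<Rightarrow> nat \<Rightarrow> real set" where
  "knots c n = {x. \<exists>k\<le>n. x = c ^ k \<or> x = - (c ^ k)}"

definition spline_with_knots :: "real set \<Rightarrow> (real \<Rightarrow> real) \<Rightarrow> bool" where
  "spline_with_knots K f \<longleftrightarrow>
     (\<forall>a b. a < b \<and> {a<..<b} \<inter> K = {} \<longrightarrow> (\<exists>p::real poly. \<forall>x\<in>{a<..<b}. f x = poly p x))"

definition Ck :: "nat \<Rightarrow> (real \<Rightarrow> real) \<Rightarrow> bool" where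
  "Ck k f \<longleftrightarrow> (\<exists>D :: nat \<Rightarrow> real \<Rightarrow> real. D 0 = f \<and>
      (\<forall>j<k. \<forall>x. (D j has_real_derivative D (Suc j) x) (at x)) \<and>
      (\<forall>j\<le>k. continuous_on UNIV (D j)))"

end

theory Submission
  imports Defs
begin

fun u :: "real \<Rightarrow> nat \<Rightarrow> real \<Rightarrow> real" where
  "u c 0 = indicator {c<..1}"
| "u c (Suc 0) = indicator {c<..1}"
| "u c (Suc (Suc n)) = (\<lambda>x. if 0 < x then 2 * integral {x..x/c} (u c (Suc n)) else 0)"

locale cc = fixes c :: real assumes c0: "0 < c" and c1: "c < 1"
begin

lemma cpow_pos: "0 < c ^ n" using c0 by simp
lemma cpow_le1: "c ^ n \<le> 1" using c0 c1 by (simp add: power_le_one)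
lemma cpow_lt1: "n \<ge> 1 \<Longrightarrow> c ^ n < 1" using c0 c1 by (simp add: power_less_one_iff)

lemma u_basic:
  assumes "n \<ge> 1"
  shows "u c n x \<ge> 0 \<and> (u c n x \<noteq> 0 \<longrightarrow> c ^ n < x \<and> x \<le> 1)"
  using assms
proof (induction n arbitrary: x rule: less_induct)
  case (less n)
  show ?case
  proof (cases "n = 1")
    case True
    then have "u c n x = indicator {c<..1} x" by simp
    then show ?thesis using c0 True by (simp add: indicator_def)
  next
    case False
    then obtain k where n: "n = Suc (Suc k)" using less.prems
      by (cases n; cases "n - 1") auto
    have IH: "\<And>y. u c (Suc k) y \<ge> 0 \<and> (u c (Suc k) y \<noteq> 0 \<longrightarrow> c ^ Suc k < y \<and> y \<le> 1)"
      using less.IH[of "Suc k"] n by auto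
    show ?thesis
    proof (cases "0 < x")
      case False then show ?thesis by (simp add: n)
    next
      case True
      have nn: "0 \<le> integral {x..x/c} (u c (Suc k))"
      proof (cases "u c (Suc k) integrable_on {x..x/c}")
        case True then show ?thesis using IH by (intro integral_nonneg) auto
      next
        case False then show ?thesis by (simp add: not_integrable_integral)
      qed
      have z1: "integral {x..x/c} (u c (Suc k)) = 0" if "1 < x"
      proof -
        have "integral {x..x/c} (u c (Suc k)) = integral {x..x/c} (\<lambda>_. 0::real)"
          using IH that by (intro integral_cong) (metis atLeastAtMost_iff dual_order.trans not_less)
        then show ?thesis by simp
      qed
      have z2: "integral {x..x/c} (u c (Suc k)) = 0" if "x \<le> c ^ Suc (Suc k)"
      proof -
        have "x / c \<le> c ^ Suc k" using that c0 by (simp add: divide_simps mult.commute)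
        then have "integral {x..x/c} (u c (Suc k)) = integral {x..x/c} (\<lambda>_. 0::real)"
          using IH by (intro integral_cong) (metis atLeastAtMost_iff order.trans not_less)
        then show ?thesis by simp
      qed
      have ux: "u c n x = 2 * integral {x..x/c} (u c (Suc k))" using True n by simp
      show ?thesis
      proof (cases "c ^ n < x \<and> x \<le> 1")
        case True then show ?thesis using nn ux by simp
      next
        case False
        then have "x \<le> c ^ n \<or> 1 < x" by linarith
        then show ?thesis using nn ux z1 z2 n by auto
      qed
    qed
  qed
qed

lemma u_nonneg: "0 \<le> u c n x"
proof (cases n)
  case 0 then show ?thesis by (simp add: indicator_def)
next
  case (Suc m) then show ?thesis using u_basic[of n x] by simp
qed

lemma u_supp: "n \<ge> 1 \<Longrightarrow> u c n x \<noteq> 0 \<Longrightarrow> c ^ n < x \<and> x \<le> 1"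
  using u_basic by blast

lemma u_zero_below: "n \<ge> 1 \<Longrightarrow> x \<le> c ^ n \<Longrightarrow> u c n x = 0"
  using u_supp[of n x] by (cases "u c n x = 0") auto

lemma u_zero_above: "n \<ge> 1 \<Longrightarrow> 1 < x \<Longrightarrow> u c n x = 0"
  using u_supp[of n x] by (cases "u c n x = 0") auto


lemma u1: "u c (Suc 0) = indicator {c<..1}" by simp

lemma ind_integrable: "(indicator {c<..1} :: real \<Rightarrow> real) integrable_on {a..b}"
proof -
  have "(\<lambda>x::real. 1::real) integrable_on ({c..1} \<inter> {a..b})"
    by (simp only: Int_atLeastAtMost) (rule integrable_const_ivl)
  then have H: "(\<lambda>x::real. if x \<in> {c..1} then 1 else 0::real) integrable_on {a..b}"
    using integrable_restrict_Int[of "{c..1}" "\<lambda>_. 1::real" "{a..b}"] by simp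
  have sp: "\<And>x. x \<in> {a..b} - {c} \<Longrightarrow> indicator {c<..1} x = (if x \<in> {c..1} then 1 else (0::real))"
    by (auto simp: indicator_def)
  show ?thesis
    by (rule integrable_spike_finite[where f="\<lambda>x. if x \<in> {c..1} then 1 else (0::real)" and S="{c}"])
       (use sp H in auto)
qed

definition F :: "nat \<Rightarrow> real \<Rightarrow> real" where "F n y = integral {0..y} (u c n)"

lemma u_F:
  assumes "n \<ge> 1" "\<And>a b. u c n integrable_on {a..b}"
  shows "u c (Suc n) x = 2 * (F n (x/c) - F n x)"
proof -
  obtain k where n: "n = Suc k" using assms(1) by (cases n) auto
  show ?thesis
  proof (cases "0 < x")
    case True
    then have "x \<le> x / c" using c0 c1 by (simp add: divide_simps)
    then have "integral {0..x} (u c n) + integral {x..x/c} (u c n) = integral {0..x/c} (u c n)"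
      using True assms(2) by (intro Henstock_Kurzweil_Integration.integral_combine) auto
    then show ?thesis using True by (simp add: n F_def)
  next
    case False
    show ?thesis
    proof (cases "x = 0")
      case True then show ?thesis by (simp add: n F_def)
    next
      case False
      then have "x < 0" "x / c < 0" using \<open>\<not> 0 < x\<close> c0 by (auto simp: divide_simps)
      then show ?thesis by (simp add: n F_def)
    qed
  qed
qed

lemma F_zero:
  assumes "n \<ge> 1" "y \<le> c ^ n"
  shows "F n y = 0"
proof (cases "y < 0")
  case True then show ?thesis by (simp add: F_def)
next
  case False
  have "integral {0..y} (u c n) = integral {0..y} (\<lambda>_. 0::real)"
    using assms by (intro integral_cong u_zero_below) auto
  then show ?thesis by (simp add: F_def)
qed

lemma F_deriv:
  assumes "n \<ge> 1" "\<And>a b. u c n integrable_on {a..b}" "isCont (u c n) y"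
  shows "(F n has_real_derivative u c n y) (at y)"
proof (cases "0 < y")
  case True
  have "((\<lambda>t. integral {0..t} (u c n)) has_vector_derivative u c n y) (at y within ({0..y+1} - {}))"
    using True assms by (intro integral_has_vector_derivative_continuous_at)
      (auto intro: continuous_at_imp_continuous_within)
  moreover have "y \<in> interior {0..y+1}" using True by simp
  then have "at y within ({0..y+1} - {}) = at y"
    by (metis Diff_empty at_within_interior)
  ultimately have "(F n has_vector_derivative u c n y) (at y)"
    unfolding F_def by metis
  then show ?thesis by (simp add: has_real_derivative_iff_has_vector_derivative)
next
  case False
  then have y: "y < c ^ n" using cpow_pos[of n] by linarith
  have "((\<lambda>_. 0) has_real_derivative 0) (at y)" by simp
  then have "(F n has_real_derivative 0) (at y)"
    by (rule has_field_derivative_transform_within_open[of _ _ _ "{..<c^n}"])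
       (use y F_zero assms(1) in auto)
  moreover have "u c n y = 0" using u_zero_below assms(1) y by simp
  ultimately show ?thesis by simp
qed

lemma F_cont:
  assumes "n \<ge> 1" "\<And>a b. u c n integrable_on {a..b}"
  shows "isCont (F n) y"
proof (cases "0 < y")
  case True
  have "continuous_on {0..y+1} (F n)"
    unfolding F_def using assms by (intro indefinite_integral_continuous_1) auto
  then show ?thesis using True by (intro continuous_on_interior[of "{0..y+1}"]) auto
next
  case False
  then have y: "y < c ^ n" using cpow_pos[of n] by linarith
  have "((\<lambda>_. 0) has_real_derivative 0) (at y)" by simp
  then have "(F n has_real_derivative 0) (at y)"
    by (rule has_field_derivative_transform_within_open[of _ _ _ "{..<c^n}"])
       (use y F_zero assms(1) in auto)
  then show ?thesis by (rule DERIV_isCont)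
qed

lemma u_cont_step:
  assumes "n \<ge> 1" "\<And>a b. u c n integrable_on {a..b}"
  shows "isCont (u c (Suc n)) x"
proof -
  have e: "u c (Suc n) = (\<lambda>x. 2 * (F n (x/c) - F n x))"
    using u_F[OF assms] by auto
  have i1: "isCont (\<lambda>x. x/c) x" using c0 by (auto intro!: continuous_intros)
  have "isCont (\<lambda>x. F n (x/c)) x"
    by (rule isCont_o2[OF i1 F_cont[OF assms]])
  then have "isCont (\<lambda>x. F n (x/c) - F n x) x"
    by (rule isCont_diff[OF _ F_cont[OF assms]])
  then show ?thesis unfolding e by (rule isCont_mult[OF continuous_const])
qed

lemma u_integrable_cont:
  assumes "n \<ge> 1"
  shows "(\<forall>a b. u c n integrable_on {a..b}) \<and> (n \<ge> 2 \<longrightarrow> (\<forall>x. isCont (u c n) x))"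
  using assms
proof (induction n)
  case 0 then show ?case by simp
next
  case (Suc n)
  show ?case
  proof (cases "n = 0")
    case True
    then have e: "u c (Suc n) = indicator {c<..1}" by simp
    show ?thesis unfolding e using ind_integrable True by simp
  next
    case False
    then have n1: "n \<ge> 1" by simp
    then have I: "\<And>a b. u c n integrable_on {a..b}" using Suc.IH by blast
    have C: "\<And>x. isCont (u c (Suc n)) x" using u_cont_step[OF n1 I] .
    have "\<And>a b. u c (Suc n) integrable_on {a..b}"
    proof -
      fix a b
      have "continuous_on {a..b} (u c (Suc n))"
        by (rule continuous_at_imp_continuous_on) (use C in blast)
      then show "u c (Suc n) integrable_on {a..b}" by (rule integrable_continuous_real)
    qed
    then show ?thesis using C by blast
  qed
qed

lemma u_integrable: "n \<ge> 1 \<Longrightarrow> u c n integrable_on {a..b}"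
  using u_integrable_cont by blast

lemma u_isCont: "n \<ge> 2 \<Longrightarrow> isCont (u c n) x"
proof -
  assume "n \<ge> 2"
  then have "n \<ge> 1" by simp
  then show ?thesis using u_integrable_cont[of n] \<open>n \<ge> 2\<close> by blast
qed

lemma u_contUNIV: "n \<ge> 2 \<Longrightarrow> continuous_on UNIV (u c n)"
proof -
  assume n: "n \<ge> 2"
  show ?thesis by (simp add: continuous_on_eq_continuous_at u_isCont[OF n])
qed

lemma u1_isCont: "x \<noteq> c \<Longrightarrow> x \<noteq> 1 \<Longrightarrow> isCont (u c (Suc 0)) x"
proof -
  assume x: "x \<noteq> c" "x \<noteq> 1"
  consider "x < c" | "c < x \<and> x < 1" | "1 < x" using x by linarith
  then show ?thesis
  proof cases
    case 1
    have "((\<lambda>_. 0) has_real_derivative 0) (at x)" by simp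
    then have "(u c (Suc 0) has_real_derivative 0) (at x)"
      by (rule has_field_derivative_transform_within_open[of _ _ _ "{..<c}"]) (use 1 in \<open>auto simp: indicator_def\<close>)
    then show ?thesis by (rule DERIV_isCont)
  next
    case 2
    have "((\<lambda>_. 1) has_real_derivative 0) (at x)" by simp
    then have "(u c (Suc 0) has_real_derivative 0) (at x)"
      by (rule has_field_derivative_transform_within_open[of _ _ _ "{c<..<1}"]) (use 2 in \<open>auto simp: indicator_def\<close>)
    then show ?thesis by (rule DERIV_isCont)
  next
    case 3
    have "((\<lambda>_. 0) has_real_derivative 0) (at x)" by simp
    then have "(u c (Suc 0) has_real_derivative 0) (at x)"
      by (rule has_field_derivative_transform_within_open[of _ _ _ "{1<..}"]) (use 3 in \<open>auto simp: indicator_def\<close>)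
    then show ?thesis by (rule DERIV_isCont)
  qed
qed

lemma u_deriv:
  assumes "n \<ge> 1" "isCont (u c n) x" "isCont (u c n) (x/c)"
  shows "(u c (Suc n) has_real_derivative 2 * (u c n (x/c) / c - u c n x)) (at x)"
proof -
  have I: "\<And>a b. u c n integrable_on {a..b}" using u_integrable assms(1) by blast
  have e: "u c (Suc n) = (\<lambda>x. 2 * (F n (x/c) - F n x))"
    using u_F[OF assms(1) I] by auto
  have d1: "((\<lambda>x. F n (x/c)) has_real_derivative u c n (x/c) * (1/c)) (at x)"
  proof -
    have d0: "((\<lambda>x. x/c) has_real_derivative 1/c) (at x)"
      using c0 by (auto intro!: derivative_eq_intros)
    show ?thesis
      using DERIV_chain2[of "F n" "u c n (x/c)" "\<lambda>x. x/c" x "1/c" UNIV] d0 F_deriv[OF assms(1) I assms(3)]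
      by simp
  qed
  have d2: "(F n has_real_derivative u c n x) (at x)" by (rule F_deriv[OF assms(1) I assms(2)])
  have d3: "((\<lambda>x. 2 * (F n (x/c) - F n x)) has_real_derivative 2 * (u c n (x/c) * (1/c) - u c n x)) (at x)"
    by (rule DERIV_cmult[OF DERIV_diff[OF d1 d2]])
  have eq: "2 * (u c n (x/c) * (1/c) - u c n x) = 2 * (u c n (x/c) / c - u c n x)" by simp
  show ?thesis unfolding e using d3 by (simp only: eq)
qed

end

context cc begin

definition h :: "nat \<Rightarrow> real \<Rightarrow> real" where "h n x = u c n x + u c n (-x)"

lemma ind_S: "(indicator (Sset c) (\<gamma> / \<bar>t\<bar>) :: real) = indicator {t. \<bar>\<gamma>\<bar> \<le> \<bar>t\<bar> \<and> \<bar>t\<bar> < \<bar>\<gamma>\<bar>/c} t"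
proof (cases "t = 0")
  case True then show ?thesis using c0 c1 by (auto simp: indicator_def Sset_def)
next
  case False
  then have tp: "\<bar>t\<bar> > 0" by simp
  have S: "x \<in> Sset c \<longleftrightarrow> c < \<bar>x\<bar> \<and> \<bar>x\<bar> \<le> 1" for x
    using c0 by (auto simp: Sset_def)
  have e1: "c < \<bar>\<gamma>\<bar> / \<bar>t\<bar> \<longleftrightarrow> \<bar>t\<bar> < \<bar>\<gamma>\<bar> / c"
    using tp c0 by (simp add: pos_less_divide_eq mult.commute)
  have e2: "\<bar>\<gamma>\<bar> / \<bar>t\<bar> \<le> 1 \<longleftrightarrow> \<bar>\<gamma>\<bar> \<le> \<bar>t\<bar>"
    using tp by (simp add: divide_le_eq_1_pos)
  have "\<gamma> / \<bar>t\<bar> \<in> Sset c \<longleftrightarrow> \<bar>\<gamma>\<bar> \<le> \<bar>t\<bar> \<and> \<bar>t\<bar> < \<bar>\<gamma>\<bar>/c"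
    unfolding S using e1 e2 by (auto simp: abs_divide)
  then show ?thesis by (simp add: indicator_def)
qed

lemma set_int_u:
  assumes "n \<ge> 1"
  shows "set_integrable lborel {a..b} (u c n)"
proof (cases "n \<ge> 2")
  case True
  then show ?thesis by (intro borel_integrable_atLeastAtMost' continuous_on_subset[OF u_contUNIV]) auto
next
  case False
  then have n: "n = Suc 0" using assms by simp
  have e: "(\<lambda>x. indicator {a..b} x *\<^sub>R u c n x) = indicator ({a..b} \<inter> {c<..1})"
    by (auto simp: n indicator_def)
  have "emeasure lborel ({a..b} \<inter> {c<..1}) \<le> emeasure lborel {a..b}"
    by (intro emeasure_mono) auto
  moreover have "emeasure lborel {a..b} < \<infinity>" by (cases "a \<le> b") auto
  ultimately have "emeasure lborel ({a..b} \<inter> {c<..1}) < \<infinity>"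
    by (rule le_less_trans)
  then show ?thesis unfolding set_integrable_def e
    by (intro integrable_real_indicator) auto
qed

lemma Kop_u:
  assumes "n \<ge> 1"
  shows "Kop c (h n) \<gamma> = 2 * integral {\<bar>\<gamma>\<bar>..\<bar>\<gamma>\<bar>/c} (u c n)"
proof -
  define a where "a = \<bar>\<gamma>\<bar>"
  define b where "b = a / c"
  have "a * c \<le> a" using c1 unfolding a_def by (intro mult_left_le) auto
  then have ab: "a \<le> b" unfolding b_def using c0 by (simp only: pos_le_divide_eq)
  define f where "f = u c n"
  have f0: "f s = 0" if "s \<le> 0" for s
  proof -
    have "s \<le> c ^ n" using cpow_pos[of n] that by linarith
    then show ?thesis unfolding f_def by (rule u_zero_below[OF assms])
  qed
  define g where "g = (\<lambda>s. indicator {a..<b} s *\<^sub>R f s)"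
  have pw: "h n t * indicator (Sset c) (\<gamma> / \<bar>t\<bar>) = g t + g (-t)" for t
  proof -
    have "h n t * indicator (Sset c) (\<gamma> / \<bar>t\<bar>) = (f t + f (-t)) * indicator {t. a \<le> \<bar>t\<bar> \<and> \<bar>t\<bar> < b} t"
      by (simp add: ind_S h_def f_def a_def b_def)
    also have "\<dots> = g t + g (-t)"
    proof (cases "t > 0")
      case True then show ?thesis using f0[of "-t"] a_def by (auto simp: g_def indicator_def)
    next
      case False
      then have "f t = 0" using f0 by simp
      then show ?thesis using False a_def by (auto simp: g_def indicator_def)
    qed
    finally show ?thesis .
  qed
  have si: "set_integrable lborel {a..b} f" unfolding f_def by (rule set_int_u[OF assms])
  then have si2: "set_integrable lborel {a..<b} f"
    by (rule set_integrable_subset) auto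
  then have ig: "integrable lborel g" unfolding g_def set_integrable_def .
  have ig2: "integrable lborel (\<lambda>t. g (-t))"
    using lborel_integrable_real_affine[OF ig, of "-1" 0] by simp
  have refl: "(\<integral>t. g (-t) \<partial>lborel) = (\<integral>t. g t \<partial>lborel)"
    using lborel_integral_real_affine[of "-1" g 0] by simp
  have ae: "(\<integral>t. g t \<partial>lborel) = (\<integral>t. indicator {a..b} t *\<^sub>R f t \<partial>lborel)"
  proof (rule integral_cong_AE)
    show "g \<in> borel_measurable lborel" using ig by (rule borel_measurable_integrable)
    show "(\<lambda>t. indicator {a..b} t *\<^sub>R f t) \<in> borel_measurable lborel"
      using si unfolding set_integrable_def by (rule borel_measurable_integrable)
    show "AE t in lborel. g t = indicator {a..b} t *\<^sub>R f t"
      using AE_lborel_singleton[of b] by eventually_elim (auto simp: g_def indicator_def)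
  qed
  have "(\<integral>t. indicator {a..b} t *\<^sub>R f t \<partial>lborel) = integral {a..b} f"
    using set_borel_integral_eq_integral(2)[OF si] unfolding set_lebesgue_integral_def .
  then have main: "(\<integral>t. g t \<partial>lborel) = integral {a..b} f" using ae by simp
  have "Kop c (h n) \<gamma> = (\<integral>t. g t + g (-t) \<partial>lborel)"
    unfolding Kop_def using pw by simp
  also have "\<dots> = (\<integral>t. g t \<partial>lborel) + (\<integral>t. g (-t) \<partial>lborel)"
    by (rule Bochner_Integration.integral_add[OF ig ig2])
  also have "\<dots> = 2 * integral {a..b} f" using refl main by simp
  finally show ?thesis by (simp add: a_def b_def f_def)
qed

lemma hseq_h: "n \<ge> 1 \<Longrightarrow> hseq c n = h n"
proof (induction n)
  case 0 then show ?case by simp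
next
  case (Suc n)
  show ?case
  proof (cases "n = 0")
    case True
    show ?thesis
    proof
      fix x
      show "hseq c (Suc n) x = h (Suc n) x"
        using True c0 c1 by (auto simp: h_def indicator_def Sset_def)
    qed
  next
    case False
    then obtain k where n: "n = Suc k" by (cases n) auto
    show ?thesis
    proof
      fix x
      have "hseq c (Suc n) x = Kop c (h n) x" using Suc False by (simp add: n)
      also have "\<dots> = 2 * integral {\<bar>x\<bar>..\<bar>x\<bar>/c} (u c n)" by (rule Kop_u) (simp add: n)
      also have "\<dots> = h (Suc n) x"
      proof (cases "x = 0")
        case True then show ?thesis by (simp add: h_def n)
      next
        case False
        then show ?thesis by (cases "x > 0") (auto simp: h_def n)
      qed
      finally show "hseq c (Suc n) x = h (Suc n) x" .
    qed
  qed
qed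

end

context cc begin

lemma int_pos_of_pos:
  assumes n: "n \<ge> 1" and pq: "p < q" and pos: "\<And>x. p < x \<Longrightarrow> x < q \<Longrightarrow> 0 < u c n x"
  shows "integral {p..q} (u c n) > 0"
proof (cases "n \<ge> 2")
  case True
  have cont: "continuous_on (cbox p q) (u c n)"
    using u_contUNIV[OF True] by (rule continuous_on_subset) auto
  have ne: "box p q \<noteq> {}" using pq by simp
  have nn: "\<And>x. x \<in> cbox p q \<Longrightarrow> u c n x \<ge> 0" using u_nonneg by simp
  have mid: "(p+q)/2 \<in> cbox p q" "u c n ((p+q)/2) \<noteq> 0"
    using pq pos[of "(p+q)/2"] by auto
  have "integral (cbox p q) (u c n) \<noteq> 0"
    using integral_cbox_eq_0_iff[OF cont ne nn] mid by blast
  moreover have "integral (cbox p q) (u c n) \<ge> 0"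
    using nn integrable_continuous[OF cont] by (intro integral_nonneg) auto
  ultimately show ?thesis by simp
next
  case False
  then have n1: "n = Suc 0" using n by simp
  have "integral {p..q} (u c n) = integral {p..q} (\<lambda>_. 1::real)"
  proof (rule integral_spike[where S="{p,q}"])
    show "negligible {p,q}" by simp
    fix x assume x: "x \<in> {p..q} - {p,q}"
    then have "0 < u c n x" using pos by auto
    then show "1 = u c n x" by (simp add: n1 indicator_def split: if_splits)
  qed
  then show ?thesis using pq by simp
qed

lemma u_pos:
  assumes "n \<ge> 1" "c ^ n < x" "x < 1"
  shows "0 < u c n x"
  using assms
proof (induction n arbitrary: x rule: less_induct)
  case (less n)
  show ?case
  proof (cases "n = 1")
    case True
    then have "u c n x = indicator {c<..1} x" by simp
    then show ?thesis using less.prems True by (simp add: indicator_def)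
  next
    case False
    then obtain k where n: "n = Suc (Suc k)" using less.prems
      by (cases n; cases "n - 1") auto
    define m where "m = Suc k"
    have m1: "m \<ge> 1" by (simp add: m_def)
    have IH: "\<And>y. c ^ m < y \<Longrightarrow> y < 1 \<Longrightarrow> 0 < u c m y"
      using less.IH[of m] n m_def by auto
    have xp: "0 < x" using less.prems cpow_pos[of n] by linarith
    define p where "p = max x (c ^ m)"
    define q where "q = min (x / c) 1"
    have xc: "c ^ m < x / c"
      using less.prems(2) c0 by (simp add: n m_def pos_less_divide_eq mult.commute)
    have xxc: "x < x / c" using xp c0 c1 by (simp add: pos_less_divide_eq)
    have pq: "p < q" unfolding p_def q_def using xc xxc less.prems(3) cpow_lt1[OF m1] by simp
    have "integral {p..q} (u c m) > 0"
      by (rule int_pos_of_pos[OF m1 pq]) (rule IH, auto simp: p_def q_def)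
    moreover have "integral {p..q} (u c m) \<le> integral {x..x/c} (u c m)"
      by (rule integral_subset_le) (auto simp: p_def q_def u_integrable[OF m1] u_nonneg)
    ultimately have "integral {x..x/c} (u c m) > 0" by simp
    moreover have "u c n x = 2 * integral {x..x/c} (u c m)" using xp by (simp add: n m_def)
    ultimately show ?thesis by simp
  qed
qed

lemma Q_formula:
  assumes "n \<ge> 1"
  shows "Qn c n = 2 * integral {0..1} (u c n)"
proof -
  define f where "f = u c n"
  have f0: "f s = 0" if "s \<notin> {0..1}" for s
  proof (cases "s \<le> 0")
    case True
    then have "s \<le> c ^ n" using cpow_pos[of n] by linarith
    then show ?thesis unfolding f_def by (rule u_zero_below[OF assms])
  next
    case False then have "1 < s" using that by auto
    then show ?thesis unfolding f_def by (rule u_zero_above[OF assms])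
  qed
  have fe: "f = (\<lambda>x. indicator {0..1} x *\<^sub>R f x)"
  proof
    fix x show "f x = indicator {0..1} x *\<^sub>R f x"
      using f0[of x] by (cases "x \<in> {0..1}") auto
  qed
  have si: "set_integrable lborel {0..1} f" unfolding f_def by (rule set_int_u[OF assms])
  then have ig: "integrable lborel f" unfolding set_integrable_def by (subst fe)
  have ig2: "integrable lborel (\<lambda>t. f (-t))"
    using lborel_integrable_real_affine[OF ig, of "-1" 0] by simp
  have refl: "(\<integral>t. f (-t) \<partial>lborel) = (\<integral>t. f t \<partial>lborel)"
    using lborel_integral_real_affine[of "-1" f 0] by simp
  have main: "(\<integral>t. f t \<partial>lborel) = integral {0..1} f"
    using set_borel_integral_eq_integral(2)[OF si] fe unfolding set_lebesgue_integral_def by simp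
  have "Qn c n = (\<integral>t. f t + f (-t) \<partial>lborel)"
    unfolding Qn_def hseq_h[OF assms] h_def f_def ..
  also have "\<dots> = (\<integral>t. f t \<partial>lborel) + (\<integral>t. f (-t) \<partial>lborel)"
    by (rule Bochner_Integration.integral_add[OF ig ig2])
  also have "\<dots> = 2 * integral {0..1} f" using refl main by simp
  finally show ?thesis by (simp add: f_def)
qed

lemma Q1: "Qn c 1 = 2 * (1 - c)"
proof -
  have "integral {0..1} (u c 1) = integral {c..1} (\<lambda>_. 1::real)"
  proof -
    have "integral {0..1} (u c 1) = integral {0..1} (\<lambda>x. if x \<in> {c..1} then 1 else (0::real))"
    proof (rule integral_spike[where S="{c}"])
      show "negligible {c}" by simp
      fix x assume "x \<in> {0..1} - {c}"
      then show "(if x \<in> {c..1} then 1 else (0::real)) = u c 1 x" by (auto simp: indicator_def)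
    qed
    also have "\<dots> = integral ({c..1} \<inter> {0..1}) (\<lambda>_. 1::real)" by (rule integral_restrict_Int)
    also have "{c..1} \<inter> {0..1} = {c..(1::real)}" using c0 c1 by auto
    finally show ?thesis .
  qed
  then show ?thesis using Q_formula[of 1] c1 by simp
qed

lemma Q_pos:
  assumes "n \<ge> 1" shows "Qn c n > 0"
proof -
  have "integral {c^n..1} (u c n) > 0"
    by (rule int_pos_of_pos[OF assms cpow_lt1[OF assms]]) (rule u_pos[OF assms], auto)
  moreover have "integral {c^n..1} (u c n) \<le> integral {0..1} (u c n)"
    using cpow_pos[of n] by (intro integral_subset_le) (auto simp: u_integrable[OF assms] u_nonneg)
  ultimately show ?thesis using Q_formula[OF assms] by simp
qed

lemma h_even: "h n (-x) = h n x" by (simp add: h_def)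

lemma h_pos:
  assumes "n \<ge> 1" "x \<in> {-1<..<-(c ^ n)} \<union> {c ^ n<..<1}"
  shows "0 < h n x"
proof -
  have "0 < u c n x \<or> 0 < u c n (-x)" using assms u_pos[OF assms(1)] by auto
  then show ?thesis using u_nonneg[of n x] u_nonneg[of n "-x"] unfolding h_def by linarith
qed

lemma h_supp:
  assumes "n \<ge> 1" "h n x \<noteq> 0"
  shows "x \<in> {-1..-(c ^ n)} \<union> {c ^ n..1}"
proof -
  have "u c n x \<noteq> 0 \<or> u c n (-x) \<noteq> 0" using assms(2) unfolding h_def by auto
  then show ?thesis using u_supp[OF assms(1), of x] u_supp[OF assms(1), of "-x"] by auto
qed

lemma h_closure:
  assumes n: "n \<ge> 1"
  shows "closure {x. h n x \<noteq> 0} = {-1..-(c ^ n)} \<union> {c ^ n..1}"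
proof
  have cl: "closed ({-1..-(c ^ n)} \<union> {c ^ n..(1::real)})" by (intro closed_Un) auto
  have "{x. h n x \<noteq> 0} \<subseteq> {-1..-(c ^ n)} \<union> {c ^ n..1}" using h_supp[OF n] by blast
  then show "closure {x. h n x \<noteq> 0} \<subseteq> {-1..-(c ^ n)} \<union> {c ^ n..1}"
    using cl by (simp add: closure_minimal)
next
  have lt: "c ^ n < 1" "-1 < -(c ^ n)" using cpow_lt1[OF n] by auto
  have "{-1<..<-(c ^ n)} \<union> {c ^ n<..<1} \<subseteq> {x. h n x \<noteq> 0}"
    using h_pos[OF n] by (metis (mono_tags, lifting) less_irrefl mem_Collect_eq subsetI)
  then have "closure ({-1<..<-(c ^ n)} \<union> {c ^ n<..<1}) \<subseteq> closure {x. h n x \<noteq> 0}"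
    by (rule closure_mono)
  then show "{-1..-(c ^ n)} \<union> {c ^ n..1} \<subseteq> closure {x. h n x \<noteq> 0}"
    using lt by (simp add: closure_Un)
qed

end

context cc begin

lemma int_u1:
  "integral {a..b} (indicator {c<..1} :: real \<Rightarrow> real) = (if max c a \<le> min 1 b then min 1 b - max c a else 0)"
proof -
  have "integral {a..b} (indicator {c<..1} :: real \<Rightarrow> real) = integral {a..b} (\<lambda>x. if x \<in> {c..1} then 1 else (0::real))"
  proof (rule integral_spike[where S="{c}"])
    show "negligible {c}" by simp
    fix x assume "x \<in> {a..b} - {c}"
    then show "(if x \<in> {c..1} then 1 else (0::real)) = indicator {c<..1} x" by (auto simp: indicator_def)
  qed
  also have "\<dots> = integral ({c..1} \<inter> {a..b}) (\<lambda>_. 1::real)" by (rule integral_restrict_Int)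
  also have "{c..1} \<inter> {a..b} = {max c a..min 1 b}" by auto
  finally show ?thesis by simp
qed

lemma rec_base: "real 1 * u c 2 x = 2 * ((1 - x) * u c 1 x + (x / c - c ^ 1) * u c 1 (x / c))"
proof (cases "0 < x")
  case False
  then have "x / c \<le> 0" using c0 by (simp add: divide_nonpos_pos)
  then show ?thesis using False c0 by (simp add: numeral_2_eq_2 indicator_def)
next
  case True
  have xc: "x \<le> x / c" using True c0 c1 by (simp add: pos_le_divide_eq mult_left_le)
  have u2: "u c 2 x = 2 * integral {x..x/c} (u c 1)" using True by (simp add: numeral_2_eq_2)
  have e1: "x / c \<le> c \<longleftrightarrow> x \<le> c * c" using c0 by (simp add: pos_divide_le_eq)
  have e2: "x / c \<le> 1 \<longleftrightarrow> x \<le> c" using c0 by (simp add: pos_divide_le_eq)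
  have e3: "c < x / c \<longleftrightarrow> c * c < x" using c0 by (simp add: pos_less_divide_eq)
  have cc: "c * c < c" using c0 c1 by simp
  consider "x \<le> c * c" | "c * c < x \<and> x \<le> c" | "c < x \<and> x \<le> 1" | "1 < x" by linarith
  then show ?thesis
  proof cases
    case 1
    then have "x / c \<le> c" using e1 by simp
    then show ?thesis using 1 cc u2 by (auto simp: int_u1 indicator_def)
  next
    case 2
    then have "x / c \<le> 1" "c < x / c" using e2 e3 by auto
    then show ?thesis using 2 u2 by (auto simp: int_u1 indicator_def)
  next
    case 3
    then have "1 < x / c" using e2 by simp
    then show ?thesis using 3 u2 by (auto simp: int_u1 indicator_def)
  next
    case 4
    then have "1 < x / c" using xc by simp
    then show ?thesis using 4 u2 by (auto simp: int_u1 indicator_def)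
  qed
qed


lemma u_deriv_off:
  assumes m: "m \<ge> 1" and t: "t \<notin> {c, 1, c * c}"
  shows "(u c (Suc m) has_real_derivative 2 * (u c m (t/c) / c - u c m t)) (at t)"
proof (rule u_deriv[OF m])
  show "isCont (u c m) t"
  proof (cases "m \<ge> 2")
    case True then show ?thesis by (rule u_isCont)
  next
    case False then have "m = Suc 0" using m by simp
    then show ?thesis using t u1_isCont by auto
  qed
  show "isCont (u c m) (t/c)"
  proof (cases "m \<ge> 2")
    case True then show ?thesis by (rule u_isCont)
  next
    case False then have m1: "m = Suc 0" using m by simp
    have "t / c \<noteq> c" using t c0 by (auto simp: divide_simps)
    moreover have "t / c \<noteq> 1" using t c0 by (auto simp: divide_simps)
    ultimately show ?thesis using m1 u1_isCont by auto
  qed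
qed

lemma rec_step:
  assumes m: "m \<ge> 1"
    and IH: "\<And>t. real m * u c (Suc m) t = 2 * ((1 - t) * u c m t + (t / c - c ^ m) * u c m (t / c))"
  shows "real (Suc m) * u c (Suc (Suc m)) x
       = 2 * ((1 - x) * u c (Suc m) x + (x / c - c ^ Suc m) * u c (Suc m) (x / c))"
proof (cases "0 < x")
  case False
  then have "x / c \<le> 0" using c0 by (simp add: divide_nonpos_pos)
  moreover have "x \<le> c ^ Suc m" "x / c \<le> c ^ Suc m"
    using cpow_pos[of "Suc m"] False \<open>x / c \<le> 0\<close> by linarith+
  then have "u c (Suc m) x = 0" "u c (Suc m) (x/c) = 0"
    using u_zero_below[of "Suc m"] by auto
  ultimately show ?thesis using False by simp
next
  case True
  define g where "g = u c (Suc m)"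
  define f where "f = u c m"
  define \<delta> where "\<delta> = (\<lambda>t. 2 * (f (t/c) / c - f t))"
  have xc: "x \<le> x / c" using True c0 c1 by (simp add: pos_le_divide_eq mult_left_le)
  have xcp: "0 < x / c" using True c0 by simp
  obtain k where mk: "m = Suc k" using m by (cases m) auto
  have m2: "Suc m \<ge> 2" using m by simp
  have gx: "g x = 2 * integral {x..x/c} f" using True by (simp add: g_def f_def mk)
  have gxc: "g (x/c) = 2 * integral {x/c..x/c/c} f" using xcp by (simp add: g_def f_def mk)
  have U: "u c (Suc (Suc m)) x = 2 * integral {x..x/c} g" using True by (simp add: g_def)
  have Ig: "g integrable_on {x..x/c}" unfolding g_def by (rule u_integrable) simp
  have If: "f integrable_on {a..b}" for a b unfolding f_def by (rule u_integrable[OF m])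
  have gcont: "continuous_on UNIV g" unfolding g_def by (rule u_contUNIV[OF m2])
  have H1: "((\<lambda>t. g t + t * \<delta> t) has_integral (x/c * g (x/c) - x * g x)) {x..x/c}"
  proof (rule fundamental_theorem_of_calculus_interior_strong[of "{c,1,c*c}" x "x/c" "\<lambda>t. t * g t"])
    show "finite {c, 1, c * c}" by simp
    show "x \<le> x / c" by (rule xc)
    show "continuous_on {x..x/c} (\<lambda>t. t * g t)"
      by (intro continuous_on_mult continuous_on_id continuous_on_subset[OF gcont]) auto
    fix t assume t: "t \<in> {x<..<x/c} - {c, 1, c * c}"
    have d: "(g has_real_derivative \<delta> t) (at t)"
      unfolding g_def \<delta>_def f_def by (rule u_deriv_off[OF m]) (use t in auto)
    have "((\<lambda>t. t * g t) has_real_derivative (1 * g t + \<delta> t * t)) (at t)"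
      by (rule DERIV_mult[OF DERIV_ident d])
    then have "((\<lambda>t. t * g t) has_real_derivative (g t + t * \<delta> t)) (at t)"
      by (rule DERIV_cong) simp
    then show "((\<lambda>t. t * g t) has_vector_derivative (g t + t * \<delta> t)) (at t)"
      by (simp add: has_real_derivative_iff_has_vector_derivative)
  qed
  have H2: "(f has_integral (g x / 2)) {x..x/c}"
    using integrable_integral[OF If[of x "x/c"]] gx by simp
  have H3: "((\<lambda>t. f (t/c)) has_integral (c * (g (x/c) / 2))) {x..x/c}"
  proof -
    have a: "(f has_integral (g (x/c) / 2)) {x/c..x/c/c}"
      using integrable_integral[OF If[of "x/c" "x/c/c"]] gxc by simp
    have ne: "1 / c \<noteq> 0" using c0 by simp
    have b: "((\<lambda>t. f (1/c * t)) has_integral (1 / \<bar>1/c\<bar>) *\<^sub>R (g (x/c) / 2)) ((\<lambda>t. t / (1/c)) ` {x/c..x/c/c})"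
      by (rule has_integral_stretch_real[OF a ne])
    have im: "(\<lambda>t. t / (1/c)) ` {x/c..x/c/c} = {x..x/c}"
      using c0 by (subst image_divide_atLeastAtMost) auto
    have fe: "(\<lambda>t. f (1/c * t)) = (\<lambda>t. f (t/c))" by simp
    have co: "(1 / \<bar>1/c\<bar>) *\<^sub>R (g (x/c) / 2) = c * (g (x/c) / 2)" using c0 by simp
    show ?thesis using b unfolding im fe co .
  qed
  define V where "V = (x/c * g (x/c) - x * g x) + 2 * (g x / 2) - 2 * c ^ m * (c * (g (x/c) / 2))"
  have H: "((\<lambda>t. (g t + t * \<delta> t) + 2 * f t - 2 * c ^ m * f (t/c)) has_integral V) {x..x/c}"
    unfolding V_def
    by (intro has_integral_diff has_integral_add H1 has_integral_mult_right H2 H3)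
  have pw: "(g t + t * \<delta> t) + 2 * f t - 2 * c ^ m * f (t/c) = real (Suc m) * g t" for t
  proof -
    have i: "real m * g t = 2 * ((1 - t) * f t + (t / c - c ^ m) * f (t / c))"
      using IH[of t] by (simp add: g_def f_def)
    have "real (Suc m) * g t = g t + real m * g t" by (simp add: algebra_simps)
    also have "\<dots> = g t + 2 * ((1 - t) * f t + (t / c - c ^ m) * f (t / c))" using i by simp
    finally show ?thesis using c0 by (simp add: \<delta>_def field_simps)
  qed
  have HH: "((\<lambda>t. real (Suc m) * g t) has_integral V) {x..x/c}"
    using H by (subst has_integral_cong[symmetric, where f="\<lambda>t. (g t + t * \<delta> t) + 2 * f t - 2 * c ^ m * f (t/c)"])
      (auto simp: pw)
  have "((\<lambda>t. real (Suc m) * g t) has_integral (real (Suc m) * integral {x..x/c} g)) {x..x/c}"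
    by (rule has_integral_mult_right[OF integrable_integral[OF Ig]])
  then have eqV: "real (Suc m) * integral {x..x/c} g = V"
    using HH by (rule has_integral_unique)
  have V2: "V = x/c*g(x/c) - x*g x + g x - c^(Suc m)*g(x/c)" unfolding V_def by (simp add: algebra_simps)
  have "real (Suc m) * u c (Suc (Suc m)) x = 2 * (real (Suc m) * integral {x..x/c} g)"
    using U by simp
  also have "\<dots> = 2 * (x/c*g(x/c) - x*g x + g x - c^(Suc m)*g(x/c))" using eqV V2 by simp
  also have "\<dots> = 2 * ((1 - x) * g x + (x / c - c ^ Suc m) * g (x / c))"
    by (simp add: algebra_simps)
  finally show ?thesis unfolding g_def .
qed

lemma recurrence_u:
  assumes "m \<ge> 1"
  shows "real m * u c (Suc m) x = 2 * ((1 - x) * u c m x + (x / c - c ^ m) * u c m (x / c))"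
  using assms
proof (induction m arbitrary: x rule: dec_induct)
  case base
  show ?case using rec_base[of x] by (simp add: numeral_2_eq_2)
next
  case (step m)
  show ?case using rec_step[OF step.hyps(1) step.IH] .
qed

end

lemma Ck_0: "continuous_on UNIV f \<Longrightarrow> Ck 0 f"
  unfolding Ck_def by (rule exI[of _ "\<lambda>j. f"]) auto

lemma Ck_cont: "Ck k f \<Longrightarrow> continuous_on UNIV f"
  unfolding Ck_def by force

lemma Ck_add:
  assumes "Ck k f" "Ck k g" shows "Ck k (\<lambda>x. f x + g x)"
proof -
  obtain D where D: "D 0 = f" "\<forall>j<k. \<forall>x. (D j has_real_derivative D (Suc j) x) (at x)"
    "\<forall>j\<le>k. continuous_on UNIV (D j)" using assms(1) unfolding Ck_def by blast
  obtain E where E: "E 0 = g" "\<forall>j<k. \<forall>x. (E j has_real_derivative E (Suc j) x) (at x)"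
    "\<forall>j\<le>k. continuous_on UNIV (E j)" using assms(2) unfolding Ck_def by blast
  show ?thesis unfolding Ck_def
  proof (intro exI[of _ "\<lambda>j x. D j x + E j x"] conjI allI impI)
    show "(\<lambda>x. D 0 x + E 0 x) = (\<lambda>x. f x + g x)" using D E by simp
    fix j x assume "j < k"
    then show "((\<lambda>x. D j x + E j x) has_real_derivative D (Suc j) x + E (Suc j) x) (at x)"
      using D(2) E(2) by (intro DERIV_add) auto
  next
    fix j assume "j \<le> k"
    then show "continuous_on UNIV (\<lambda>x. D j x + E j x)"
      using D(3) E(3) by (intro continuous_on_add) auto
  qed
qed

lemma Ck_cmult:
  assumes "Ck k f" shows "Ck k (\<lambda>x. a * f x)"
proof -
  obtain D where D: "D 0 = f" "\<forall>j<k. \<forall>x. (D j has_real_derivative D (Suc j) x) (at x)"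
    "\<forall>j\<le>k. continuous_on UNIV (D j)" using assms(1) unfolding Ck_def by blast
  show ?thesis unfolding Ck_def
  proof (intro exI[of _ "\<lambda>j x. a * D j x"] conjI allI impI)
    show "(\<lambda>x. a * D 0 x) = (\<lambda>x. a * f x)" using D by simp
    fix j x assume "j < k"
    then show "((\<lambda>x. a * D j x) has_real_derivative a * D (Suc j) x) (at x)"
      using D(2) by (intro DERIV_cmult) auto
  next
    fix j assume "j \<le> k"
    then show "continuous_on UNIV (\<lambda>x. a * D j x)"
      using D(3) by (intro continuous_on_mult continuous_on_const) auto
  qed
qed

lemma Ck_scale:
  assumes "Ck k f" shows "Ck k (\<lambda>x. f (a * x))"
proof -
  obtain D where D: "D 0 = f" "\<forall>j<k. \<forall>x. (D j has_real_derivative D (Suc j) x) (at x)"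
    "\<forall>j\<le>k. continuous_on UNIV (D j)" using assms(1) unfolding Ck_def by blast
  show ?thesis unfolding Ck_def
  proof (intro exI[of _ "\<lambda>j x. a ^ j * D j (a * x)"] conjI allI impI)
    show "(\<lambda>x. a ^ 0 * D 0 (a * x)) = (\<lambda>x. f (a * x))" using D by simp
    fix j x assume j: "j < k"
    have d0: "((\<lambda>x. a * x) has_real_derivative a) (at x)"
      using DERIV_cmult[OF DERIV_ident, of a x] by simp
    have d1: "(D j has_real_derivative D (Suc j) (a * x)) (at (a * x))" using D(2) j by auto
    have "((\<lambda>x. D j (a * x)) has_real_derivative D (Suc j) (a * x) * a) (at x)"
      using DERIV_chain2[OF d1 d0] .
    then have "((\<lambda>x. a ^ j * D j (a * x)) has_real_derivative a ^ j * (D (Suc j) (a * x) * a)) (at x)"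
      by (rule DERIV_cmult)
    then show "((\<lambda>x. a ^ j * D j (a * x)) has_real_derivative a ^ Suc j * D (Suc j) (a * x)) (at x)"
      by (rule DERIV_cong) (simp add: algebra_simps)
  next
    fix j assume "j \<le> k"
    then have c: "continuous_on UNIV (D j)" using D(3) by auto
    have "continuous_on UNIV (\<lambda>x. D j (a * x))"
      using continuous_on_compose[of UNIV "\<lambda>x. a * x" "D j"] c
      by (auto simp: o_def intro: continuous_on_subset continuous_intros)
    then show "continuous_on UNIV (\<lambda>x. a ^ j * D j (a * x))"
      by (intro continuous_on_mult continuous_on_const)
  qed
qed

lemma Ck_deriv:
  assumes d: "\<And>x. (f has_real_derivative g x) (at x)" and g: "Ck k g"
  shows "Ck (Suc k) f"
proof -
  obtain D where D: "D 0 = g" "\<forall>j<k. \<forall>x. (D j has_real_derivative D (Suc j) x) (at x)"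
    "\<forall>j\<le>k. continuous_on UNIV (D j)" using g unfolding Ck_def by blast
  define D' where "D' = (\<lambda>j. if j = 0 then f else D (j - 1))"
  show ?thesis unfolding Ck_def
  proof (intro exI[of _ D'] conjI allI impI)
    show "D' 0 = f" by (simp add: D'_def)
    fix j x assume j: "j < Suc k"
    show "(D' j has_real_derivative D' (Suc j) x) (at x)"
    proof (cases j)
      case 0 then show ?thesis using d D(1) by (simp add: D'_def)
    next
      case (Suc i) then show ?thesis using D(2) j by (simp add: D'_def)
    qed
  next
    fix j assume j: "j \<le> Suc k"
    show "continuous_on UNIV (D' j)"
    proof (cases j)
      case 0
      have "continuous_on UNIV f"
        using d by (intro continuous_at_imp_continuous_on ballI DERIV_isCont) blast
      then show ?thesis using 0 by (simp add: D'_def)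
    next
      case (Suc i) then show ?thesis using D(3) j by (simp add: D'_def)
    qed
  qed
qed

context cc begin

lemma u_Ck: "n \<ge> 2 \<Longrightarrow> Ck (n - 2) (u c n)"
proof (induction n rule: dec_induct)
  case base
  show ?case using u_contUNIV[of 2] by (simp add: Ck_0)
next
  case (step n)
  have n1: "n \<ge> 1" using step.hyps by simp
  have d: "(u c (Suc n) has_real_derivative 2 * (u c n (x/c) / c - u c n x)) (at x)" for x
    by (rule u_deriv[OF n1 u_isCont[OF step.hyps(1)] u_isCont[OF step.hyps(1)]])
  have e: "(\<lambda>x. 2 * (u c n (x/c) / c - u c n x)) = (\<lambda>x. (2/c) * u c n ((1/c) * x) + (-2) * u c n x)"
    by (auto simp: algebra_simps)
  have "Ck (n - 2) (\<lambda>x. 2 * (u c n (x/c) / c - u c n x))"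
    unfolding e by (intro Ck_add Ck_cmult Ck_scale step.IH)
  then have "Ck (Suc (n - 2)) (u c (Suc n))" using d by (intro Ck_deriv) auto
  moreover have "Suc (n - 2) = Suc n - 2" using step.hyps by simp
  ultimately show ?case by simp
qed

lemma h_Ck: "n \<ge> 2 \<Longrightarrow> Ck (n - 2) (h n)"
proof -
  assume n: "n \<ge> 2"
  have e: "h n = (\<lambda>x. u c n x + u c n ((-1) * x))" by (auto simp: h_def)
  show ?thesis unfolding e by (intro Ck_add Ck_scale u_Ck n)
qed

lemma u_spline:
  assumes "n \<ge> 1"
  shows "\<And>a b. a < b \<Longrightarrow> {a<..<b} \<inter> {y. \<exists>k\<le>n. y = c ^ k} = {} \<Longrightarrow>
     \<exists>p. \<forall>x\<in>{a<..<b}. u c n x = poly p x"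
  using assms
proof (induction n rule: dec_induct)
  case base
  fix a b :: real assume ab: "a < b" and K: "{a<..<b} \<inter> {y. \<exists>k\<le>1. y = c ^ k} = {}"
  have nc: "\<not> (a < c \<and> c < b)" using K by (auto intro!: exI[of _ 1])
  have n1: "\<not> (a < 1 \<and> 1 < b)" using K by (auto intro!: exI[of _ 0])
  show "\<exists>p. \<forall>x\<in>{a<..<b}. u c 1 x = poly p x"
  proof (cases "b \<le> c")
    case True
    show ?thesis by (rule exI[of _ 0]) (use True in \<open>auto simp: indicator_def\<close>)
  next
    case False
    then have ac: "c \<le> a" using nc ab by linarith
    show ?thesis
    proof (cases "b \<le> 1")
      case True
      show ?thesis by (rule exI[of _ "[:1:]"]) (use True ac in \<open>auto simp: indicator_def\<close>)
    next
      case False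
      then have "1 \<le> a" using n1 ab by linarith
      then show ?thesis by (intro exI[of _ 0]) (auto simp: indicator_def)
    qed
  qed
next
  case (step n)
  fix a b :: real assume ab: "a < b" and K: "{a<..<b} \<inter> {y. \<exists>k\<le>Suc n. y = c ^ k} = {}"
  have sub: "{y. \<exists>k\<le>n. y = c ^ k} \<subseteq> {y. \<exists>k\<le>Suc n. y = c ^ k}" by (blast intro: le_SucI)
  have K1: "{a<..<b} \<inter> {y. \<exists>k\<le>n. y = c ^ k} = {}" using K sub by blast
  have abc: "a / c < b / c" using ab c0 by (simp add: divide_strict_right_mono)
  have K2: "{a/c<..<b/c} \<inter> {y. \<exists>k\<le>n. y = c ^ k} = {}"
  proof (rule ccontr)
    assume "{a/c<..<b/c} \<inter> {y. \<exists>k\<le>n. y = c ^ k} \<noteq> {}"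
    then obtain y where y0: "y \<in> {a/c<..<b/c}" "\<exists>k\<le>n. y = c ^ k" by blast
    then obtain k where "k \<le> n" "y = c ^ k" by blast
    then have y: "a/c < y" "y < b/c" "k \<le> n" "y = c ^ k" using y0 by auto
    have "a < c * y" "c * y < b" using y(1,2) c0 by (auto simp: divide_less_eq less_divide_eq mult.commute)
    moreover have "c * y = c ^ Suc k" using y(4) by simp
    ultimately show False using K y(3) by (auto intro!: exI[of _ "Suc k"])
  qed
  obtain p where p: "\<forall>x\<in>{a<..<b}. u c n x = poly p x" using step.IH[OF ab K1] step.hyps by auto
  obtain q where q: "\<forall>x\<in>{a/c<..<b/c}. u c n x = poly q x" using step.IH[OF abc K2] step.hyps by auto
  have n1: "n \<ge> 1" using step.hyps by simp
  define P where "P = smult (2 / real n) ([:1, -1:] * p + [:-(c ^ n), 1/c:] * pcompose q [:0, 1/c:])"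
  show "\<exists>P. \<forall>x\<in>{a<..<b}. u c (Suc n) x = poly P x"
  proof (intro exI[of _ P] ballI)
    fix x assume x: "x \<in> {a<..<b}"
    have xc: "x / c \<in> {a/c<..<b/c}" using x c0 by (auto simp: divide_strict_right_mono)
    have "real n * u c (Suc n) x = 2 * ((1 - x) * u c n x + (x / c - c ^ n) * u c n (x / c))"
      by (rule recurrence_u[OF n1])
    also have "\<dots> = 2 * ((1 - x) * poly p x + (x / c - c ^ n) * poly q (x / c))"
      using p x q xc by simp
    finally have "u c (Suc n) x = 2 / real n * ((1 - x) * poly p x + (x / c - c ^ n) * poly q (x / c))"
      using n1 by (simp add: field_simps)
    also have "\<dots> = poly P x" unfolding P_def by (simp add: poly_pcompose algebra_simps)
    finally show "u c (Suc n) x = poly P x" .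
  qed
qed

lemma h_spline:
  assumes "n \<ge> 1"
  shows "spline_with_knots (knots c n) (h n)"
  unfolding spline_with_knots_def
proof (intro allI impI)
  fix a b :: real assume H: "a < b \<and> {a<..<b} \<inter> knots c n = {}"
  have K1: "{a<..<b} \<inter> {y. \<exists>k\<le>n. y = c ^ k} = {}" using H by (auto simp: knots_def)
  have K2: "{-b<..<-a} \<inter> {y. \<exists>k\<le>n. y = c ^ k} = {}"
  proof (rule ccontr)
    assume "{-b<..<-a} \<inter> {y. \<exists>k\<le>n. y = c ^ k} \<noteq> {}"
    then obtain y where y0: "y \<in> {-b<..<-a}" "\<exists>k\<le>n. y = c ^ k" by blast
    then obtain k where "k \<le> n" "y = c ^ k" by blast
    then have y: "-b < y" "y < -a" "k \<le> n" "y = c ^ k" using y0 by auto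
    then have "-y \<in> {a<..<b} \<inter> knots c n" by (auto simp: knots_def)
    then show False using H by blast
  qed
  have ab2: "-b < -a" using H by simp
  obtain p where p: "\<forall>x\<in>{a<..<b}. u c n x = poly p x" using u_spline[OF assms _ K1] H by auto
  obtain q where q: "\<forall>x\<in>{-b<..<-a}. u c n x = poly q x" using u_spline[OF assms ab2 K2] by auto
  show "\<exists>P::real poly. \<forall>x\<in>{a<..<b}. h n x = poly P x"
  proof (intro exI[of _ "p + pcompose q [:0, -1:]"] ballI)
    fix x assume x: "x \<in> {a<..<b}"
    then have "-x \<in> {-b<..<-a}" by auto
    then show "h n x = poly (p + pcompose q [:0, -1:]) x"
      using p q x by (simp add: h_def poly_pcompose)
  qed
qed

end

context cc begin

lemma int_zero_above:
  assumes m: "m \<ge> 1" and A: "1 \<le> A"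
  shows "integral {A..B} (u c m) = 0"
proof -
  have "integral {A..B} (u c m) = integral {A..B} (\<lambda>_. 0::real)"
  proof (rule integral_spike[where S="{1}"])
    show "negligible {1::real}" by simp
    fix t assume "t \<in> {A..B} - {1}"
    then have "1 < t" using A by auto
    then show "0 = u c m t" using u_zero_above[OF m] by simp
  qed
  then show ?thesis by simp
qed

lemma int_zero_below:
  assumes m: "m \<ge> 1" and B: "B \<le> c ^ m"
  shows "integral {A..B} (u c m) = 0"
proof -
  have "integral {A..B} (u c m) = integral {A..B} (\<lambda>_. 0::real)"
    by (rule integral_cong) (use B u_zero_below[OF m] in auto)
  then show ?thesis by simp
qed

lemma int_core:
  assumes m: "m \<ge> 1" and A: "A \<le> c ^ m" and B: "1 \<le> B"
  shows "integral {A..B} (u c m) = integral {c ^ m..1} (u c m)"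
proof -
  have l: "c ^ m \<le> 1" by (rule cpow_le1)
  have "integral {A..c^m} (u c m) + integral {c^m..B} (u c m) = integral {A..B} (u c m)"
    using A l B by (intro Henstock_Kurzweil_Integration.integral_combine u_integrable[OF m]) auto
  moreover have "integral {c^m..1} (u c m) + integral {1..B} (u c m) = integral {c^m..B} (u c m)"
    using l B by (intro Henstock_Kurzweil_Integration.integral_combine u_integrable[OF m]) auto
  moreover have "integral {A..c^m} (u c m) = 0" by (rule int_zero_below[OF m]) simp
  moreover have "integral {1..B} (u c m) = 0" by (rule int_zero_above[OF m]) simp
  ultimately show ?thesis by simp
qed

lemma h_int:
  assumes m: "m \<ge> 1"
  shows "h (Suc m) y = 2 * integral {\<bar>y\<bar>..\<bar>y\<bar>/c} (u c m)"
proof -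
  obtain k where mk: "m = Suc k" using m by (cases m) auto
  consider "y > 0" | "y < 0" | "y = 0" by linarith
  then show ?thesis
  proof cases
    case 1 then show ?thesis by (simp add: h_def mk)
  next
    case 2 then show ?thesis by (simp add: h_def mk)
  next
    case 3 then show ?thesis by (simp add: h_def mk)
  qed
qed

lemma term_eq:
  assumes m: "m \<ge> 1"
  shows "hseq c (Suc m) (c powi j * \<gamma>) = 2 * integral {c powi j * \<bar>\<gamma>\<bar> .. c powi (j - 1) * \<bar>\<gamma>\<bar>} (u c m)"
proof -
  have a: "\<bar>c powi j * \<gamma>\<bar> = c powi j * \<bar>\<gamma>\<bar>" using c0 by (simp add: abs_mult)
  have b: "c powi j * \<bar>\<gamma>\<bar> / c = c powi (j - 1) * \<bar>\<gamma>\<bar>"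
    using c0 by (simp add: power_int_diff)
  show ?thesis using hseq_h[of "Suc m"] h_int[OF m, of "c powi j * \<gamma>"] a b by simp
qed

lemma cpowi_anti: "i \<le> j \<Longrightarrow> c powi j \<le> c powi i"
  using c0 c1 by (intro power_int_decreasing) auto

lemma telescope:
  assumes m: "m \<ge> 1" and a: "0 < a" and lohi: "lo - 1 \<le> hi"
  shows "(\<Sum>j\<in>{lo..hi}. integral {c powi j * a .. c powi (j - 1) * a} (u c m))
       = integral {c powi hi * a .. c powi (lo - 1) * a} (u c m)"
  using lohi
proof (induction hi rule: int_ge_induct)
  case base
  then show ?case by simp
next
  case (step i)
  have s: "{lo..i+1} = insert (i+1) {lo..i}" using step.hyps by auto
  have le1: "c powi (i + 1) * a \<le> c powi i * a" using cpowi_anti[of i "i+1"] a by simp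
  have le2: "c powi i * a \<le> c powi (lo - 1) * a" using cpowi_anti[of "lo - 1" i] a step.hyps by simp
  have "(\<Sum>j\<in>{lo..i+1}. integral {c powi j * a .. c powi (j - 1) * a} (u c m))
      = integral {c powi (i+1) * a .. c powi i * a} (u c m) + integral {c powi i * a .. c powi (lo - 1) * a} (u c m)"
    unfolding s using step.IH by simp
  also have "\<dots> = integral {c powi (i+1) * a .. c powi (lo - 1) * a} (u c m)"
    using le1 le2 by (intro Henstock_Kurzweil_Integration.integral_combine u_integrable[OF m]) auto
  finally show ?case .
qed

end

context cc begin

lemma sum_main:
  assumes m: "m \<ge> 1" and g: "\<gamma> \<noteq> 0"
  shows "\<exists>lo hi. (\<forall>j. j \<notin> {lo..hi} \<longrightarrow> hseq c (Suc m) (c powi j * \<gamma>) = 0)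
     \<and> (\<Sum>j\<in>{lo..hi}. hseq c (Suc m) (c powi j * \<gamma>)) = Qn c m"
proof -
  define a where "a = \<bar>\<gamma>\<bar>"
  have a: "0 < a" using g by (simp add: a_def)
  have "0 < c ^ m / a" using a cpow_pos[of m] by simp
  then obtain N1 where N1: "c ^ N1 < c ^ m / a" using real_arch_pow_inv c1 by blast
  obtain N2 where N2: "c ^ N2 < a" using real_arch_pow_inv[OF a c1] by blast
  define lo where "lo = 1 - int N2"
  define hi where "hi = max (int N1) (lo - 1)"
  have lohi: "lo - 1 \<le> hi" by (simp add: hi_def)
  have Hi: "c powi hi * a \<le> c ^ m"
  proof -
    have "c powi hi \<le> c powi (int N1)" using cpowi_anti[of "int N1" hi] by (simp add: hi_def)
    then have "c powi hi * a \<le> c ^ N1 * a" using a by (simp add: mult_right_mono)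
    also have "\<dots> < c ^ m" using N1 a by (simp add: pos_less_divide_eq)
    finally show ?thesis by simp
  qed
  have Lo: "1 \<le> c powi (lo - 1) * a"
  proof -
    have "c powi (lo - 1) = inverse (c ^ N2)" by (simp add: lo_def power_int_minus)
    then show ?thesis using N2 cpow_pos[of N2] by (simp add: field_simps)
  qed
  have T: "hseq c (Suc m) (c powi j * \<gamma>) = 2 * integral {c powi j * a .. c powi (j - 1) * a} (u c m)" for j
    unfolding a_def by (rule term_eq[OF m])
  have Z: "hseq c (Suc m) (c powi j * \<gamma>) = 0" if j: "j \<notin> {lo..hi}" for j
  proof (cases "j < lo")
    case True
    then have "c powi (lo - 1) \<le> c powi j" using cpowi_anti[of j "lo - 1"] by simp
    then have "1 \<le> c powi j * a" using Lo a by (meson mult_right_mono less_le order_trans)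
    then show ?thesis unfolding T by (simp add: int_zero_above[OF m])
  next
    case False
    then have "hi \<le> j - 1" using j by auto
    then have "c powi (j - 1) \<le> c powi hi" using cpowi_anti by simp
    then have "c powi (j - 1) * a \<le> c ^ m" using Hi a by (meson mult_right_mono less_le order_trans)
    then show ?thesis unfolding T by (simp add: int_zero_below[OF m])
  qed
  have "(\<Sum>j\<in>{lo..hi}. hseq c (Suc m) (c powi j * \<gamma>))
      = 2 * (\<Sum>j\<in>{lo..hi}. integral {c powi j * a .. c powi (j - 1) * a} (u c m))"
    unfolding T by (simp add: sum_distrib_left)
  also have "\<dots> = 2 * integral {c powi hi * a .. c powi (lo - 1) * a} (u c m)"
    by (simp add: telescope[OF m a lohi])
  also have "\<dots> = 2 * integral {c ^ m .. 1} (u c m)" by (simp add: int_core[OF m Hi Lo])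
  also have "\<dots> = Qn c m" using Q_formula[OF m] int_core[OF m, of 0 1] cpow_pos[of m] by simp
  finally show ?thesis using Z by blast
qed

lemma hseq_nonneg: "n \<ge> 1 \<Longrightarrow> 0 \<le> hseq c n x"
  using hseq_h[of n] u_nonneg[of n x] u_nonneg[of n "-x"] by (simp add: h_def)

lemma infsum_eq_sum:
  assumes "\<And>j. j \<notin> B \<Longrightarrow> f j = 0" "finite B"
  shows "(\<Sum>\<^sub>\<infinity>j. f j) = sum f B"
proof -
  have "infsum f UNIV = infsum f B"
    by (rule infsum_cong_neutral) (use assms in auto)
  then show ?thesis using assms(2) by simp
qed

lemma part_vi:
  assumes m: "m \<ge> 1" and g: "\<gamma> \<noteq> 0"
  shows "1 / Qn c m * (\<Sum>\<^sub>\<infinity>j::int. hseq c (Suc m) (c powi j * \<gamma>)) = 1"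
proof -
  obtain lo hi where Z: "\<forall>j. j \<notin> {lo..hi} \<longrightarrow> hseq c (Suc m) (c powi j * \<gamma>) = 0"
    and S: "(\<Sum>j\<in>{lo..hi}. hseq c (Suc m) (c powi j * \<gamma>)) = Qn c m"
    using sum_main[OF m g] by blast
  have "(\<Sum>\<^sub>\<infinity>j::int. hseq c (Suc m) (c powi j * \<gamma>)) = (\<Sum>j\<in>{lo..hi}. hseq c (Suc m) (c powi j * \<gamma>))"
    by (rule infsum_eq_sum) (use Z in auto)
  then have "(\<Sum>\<^sub>\<infinity>j::int. hseq c (Suc m) (c powi j * \<gamma>)) = Qn c m" using S by simp
  then show ?thesis using Q_pos[OF m] by simp
qed

lemma part_vii:
  assumes m: "m \<ge> 1" and g: "\<gamma> \<noteq> 0"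
  shows "1 / real (2 * m + 1) \<le> 1 / (Qn c m)\<^sup>2 * (\<Sum>\<^sub>\<infinity>j::int. \<bar>hseq c (Suc m) (c powi j * \<gamma>)\<bar>\<^sup>2)
       \<and> 1 / (Qn c m)\<^sup>2 * (\<Sum>\<^sub>\<infinity>j::int. \<bar>hseq c (Suc m) (c powi j * \<gamma>)\<bar>\<^sup>2) \<le> 1"
proof -
  define x where "x = (\<lambda>j. hseq c (Suc m) (c powi j * \<gamma>))"
  define a where "a = \<bar>\<gamma>\<bar>"
  define S where "S = Qn c m"
  have Sp: "0 < S" using Q_pos[OF m] by (simp add: S_def)
  obtain lo hi where Z: "\<forall>j. j \<notin> {lo..hi} \<longrightarrow> x j = 0"
    and Ssum: "(\<Sum>j\<in>{lo..hi}. x j) = S"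
    using sum_main[OF m g] unfolding x_def S_def by blast
  have xnn: "0 \<le> x j" for j unfolding x_def by (rule hseq_nonneg) simp
  have I0: "(\<Sum>\<^sub>\<infinity>j::int. \<bar>x j\<bar>\<^sup>2) = (\<Sum>j\<in>{lo..hi}. \<bar>x j\<bar>\<^sup>2)"
    by (rule infsum_eq_sum) (use Z in auto)
  have I: "(\<Sum>\<^sub>\<infinity>j::int. \<bar>x j\<bar>\<^sup>2) = (\<Sum>j\<in>{lo..hi}. (x j)\<^sup>2)"
    unfolding I0 using xnn by simp
  define Q2 where "Q2 = (\<Sum>j\<in>{lo..hi}. (x j)\<^sup>2)"
  have up: "Q2 \<le> S * S"
  proof -
    have "x j \<le> S" if "j \<in> {lo..hi}" for j
      unfolding Ssum[symmetric] by (rule member_le_sum) (use that xnn in auto)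
    then have "(x j)\<^sup>2 \<le> x j * S" if "j \<in> {lo..hi}" for j
      using that xnn[of j] by (simp add: power2_eq_square mult_left_mono)
    then have "Q2 \<le> (\<Sum>j\<in>{lo..hi}. x j * S)" unfolding Q2_def by (intro sum_mono) auto
    also have "\<dots> = (\<Sum>j\<in>{lo..hi}. x j) * S" by (rule sum_distrib_right[symmetric])
    also have "\<dots> = S * S" using Ssum by simp
    finally show ?thesis .
  qed
  define J where "J = {j \<in> {lo..hi}. x j \<noteq> 0}"
  have fJ: "finite J" unfolding J_def by (rule finite_subset[of _ "{lo..hi}"]) auto
  have Jsub0: "J \<subseteq> {lo..hi}" by (auto simp: J_def)
  have Jz: "\<forall>i\<in>{lo..hi} - J. x i = 0" by (auto simp: J_def)
  have "sum x {lo..hi} = sum x J" by (rule sum.mono_neutral_right[OF _ Jsub0 Jz]) simp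
  then have sumJ: "(\<Sum>j\<in>J. x j) = S" using Ssum by simp
  have Jz2: "\<forall>i\<in>{lo..hi} - J. (x i)\<^sup>2 = 0" using Jz by simp
  have "(\<Sum>j\<in>{lo..hi}. (x j)\<^sup>2) = (\<Sum>j\<in>J. (x j)\<^sup>2)"
    by (rule sum.mono_neutral_right[OF _ Jsub0 Jz2]) simp
  then have sumJ2: "(\<Sum>j\<in>J. (x j)\<^sup>2) = Q2" by (simp add: Q2_def)
  have Jne: "J \<noteq> {}" using sumJ Sp by auto
  then obtain j1 where j1: "j1 \<in> J" by blast
  have T: "x j = 2 * integral {c powi j * a .. c powi (j - 1) * a} (u c m)" for j
    unfolding x_def a_def by (rule term_eq[OF m])
  have bnd: "k - j \<le> int m" if "j \<in> J" "k \<in> J" for j k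
  proof (rule ccontr)
    assume "\<not> k - j \<le> int m"
    then have d: "int m \<le> k - 1 - j" by simp
    have xk: "x k \<noteq> 0" "x j \<noteq> 0" using that by (auto simp: J_def)
    have "\<not> (c powi (k - 1) * a \<le> c ^ m)" using xk(1) unfolding T by (auto simp: int_zero_below[OF m])
    then have A1: "c ^ m < c powi (k - 1) * a" by simp
    have "\<not> (1 \<le> c powi j * a)" using xk(2) unfolding T by (auto simp: int_zero_above[OF m])
    then have A2: "c powi j * a < 1" by simp
    have "c powi (k - 1) = c powi (k - 1 - j) * c powi j"
      using c0 power_int_add[of c "k - 1 - j" j] by simp
    then have "c powi (k - 1) * a = c powi (k - 1 - j) * (c powi j * a)" by simp
    also have "\<dots> < c powi (k - 1 - j) * 1" using A2 c0 by (intro mult_strict_left_mono) auto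
    also have "\<dots> \<le> c powi (int m)" using cpowi_anti[OF d] by simp
    finally show False using A1 by simp
  qed
  have Jsub: "J \<subseteq> {j1 - int m .. j1 + int m}"
  proof
    fix k assume "k \<in> J"
    then show "k \<in> {j1 - int m .. j1 + int m}" using bnd[OF j1] bnd[OF _ j1] by force
  qed
  have cJ: "card J \<le> 2 * m + 1"
  proof -
    have "card J \<le> card {j1 - int m .. j1 + int m}" by (rule card_mono) (use Jsub in auto)
    also have "\<dots> = 2 * m + 1" by simp
    finally show ?thesis .
  qed
  have "S\<^sup>2 \<le> Q2 * real (card J)"
    using sum_squared_le_sum_of_squares[of x J] sumJ sumJ2 by simp
  also have "\<dots> \<le> Q2 * real (2 * m + 1)"
    using cJ by (intro mult_left_mono) (auto simp: Q2_def intro!: sum_nonneg)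
  finally have lo2: "S\<^sup>2 \<le> Q2 * real (2 * m + 1)" .
  have low: "1 / real (2 * m + 1) \<le> 1 / S\<^sup>2 * Q2"
    using lo2 Sp by (simp add: field_simps)
  have high: "1 / S\<^sup>2 * Q2 \<le> 1"
    using up Sp by (simp add: field_simps power2_eq_square)
  show ?thesis using low high I unfolding S_def Q2_def x_def by simp
qed

end

context cc begin

lemma h_rec_nonneg:
  assumes m: "m \<ge> 1" and g: "0 \<le> \<gamma>"
  shows "real m * h (Suc m) \<gamma> = 2 * ((1 - \<bar>\<gamma>\<bar>) * h m \<gamma> + (\<bar>\<gamma>\<bar> / c - c ^ m) * h m (\<gamma> / c))"
proof -
  have z1: "u c (Suc m) (-\<gamma>) = 0" using g cpow_pos[of "Suc m"] by (intro u_zero_below) auto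
  have z2: "u c m (-\<gamma>) = 0" using g cpow_pos[of m] m by (intro u_zero_below) auto
  have "0 \<le> \<gamma> / c" using g c0 by simp
  then have z3: "u c m (-(\<gamma> / c)) = 0" using cpow_pos[of m] m by (intro u_zero_below) auto
  show ?thesis using recurrence_u[OF m, of \<gamma>] z1 z2 z3 g by (simp add: h_def)
qed

lemma h_rec:
  assumes m: "m \<ge> 1"
  shows "h (Suc m) \<gamma> = 2 / (real (Suc m) - 1) * ((1 - \<bar>\<gamma>\<bar>) * h m \<gamma> + (\<bar>\<gamma>\<bar> / c - c ^ m) * h m (\<gamma> / c))"
proof -
  have R: "real m * h (Suc m) \<gamma> = 2 * ((1 - \<bar>\<gamma>\<bar>) * h m \<gamma> + (\<bar>\<gamma>\<bar> / c - c ^ m) * h m (\<gamma> / c))"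
  proof (cases "0 \<le> \<gamma>")
    case True then show ?thesis by (rule h_rec_nonneg[OF m])
  next
    case False
    then have "0 \<le> -\<gamma>" by simp
    from h_rec_nonneg[OF m this] show ?thesis
      by (simp add: h_even minus_divide_left[symmetric])
  qed
  have mp: "real m > 0" using m by simp
  from R mp show ?thesis by (simp add: field_simps)
qed

end

theorem proposition3p7:
  fixes c :: real
  assumes "0 < c" and "c < 1"
  shows
    "(\<forall>n\<ge>1. spline_with_knots (knots c n) (hseq c n))
   \<and> (\<forall>n\<ge>1. \<forall>\<gamma>. hseq c n (-\<gamma>) = hseq c n \<gamma>)
   \<and> (\<forall>n\<ge>2. Ck (n - 2) (hseq c n))
   \<and> (\<forall>n\<ge>1. closure {\<gamma>. hseq c n \<gamma> \<noteq> 0} = {-1..-(c ^ n)} \<union> {c ^ n..1}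
             \<and> (\<forall>\<gamma> \<in> {-1<..<-(c ^ n)} \<union> {c ^ n<..<1}. hseq c n \<gamma> > 0))
   \<and> (\<forall>n\<ge>1. Qn c n > 0) \<and> Qn c 1 = 2 * (1 - c)
   \<and> (\<forall>n\<ge>2. \<forall>\<gamma>. \<gamma> \<noteq> 0 \<longrightarrow>
         1 / Qn c (n - 1) * (\<Sum>\<^sub>\<infinity>j::int. hseq c n (c powi j * \<gamma>)) = 1)
   \<and> (\<forall>n\<ge>2. \<exists>C>0. \<forall>\<gamma>. \<gamma> \<noteq> 0 \<longrightarrow>
         C \<le> 1 / (Qn c (n - 1))\<^sup>2 * (\<Sum>\<^sub>\<infinity>j::int. \<bar>hseq c n (c powi j * \<gamma>)\<bar>\<^sup>2)
       \<and> 1 / (Qn c (n - 1))\<^sup>2 * (\<Sum>\<^sub>\<infinity>j::int. \<bar>hseq c n (c powi j * \<gamma>)\<bar>\<^sup>2) \<le> 1)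
   \<and> (\<forall>n\<ge>2. \<forall>\<gamma>. hseq c n \<gamma> = 2 / (real n - 1) *
         ((1 - \<bar>\<gamma>\<bar>) * hseq c (n - 1) \<gamma>
          + (\<bar>\<gamma>\<bar> / c - c ^ (n - 1)) * hseq c (n - 1) (\<gamma> / c)))"
proof -
  interpret cc c using assms by unfold_locales
  have P1: "\<forall>n\<ge>1. spline_with_knots (knots c n) (hseq c n)"
    using hseq_h h_spline by simp
  have P2: "\<forall>n\<ge>1. \<forall>\<gamma>. hseq c n (-\<gamma>) = hseq c n \<gamma>"
    using hseq_h h_even by simp
  have P3: "\<forall>n\<ge>2. Ck (n - 2) (hseq c n)"
  proof (intro allI impI)
    fix n :: nat assume n: "n \<ge> 2"
    then have "hseq c n = h n" by (intro hseq_h) simp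
    then show "Ck (n - 2) (hseq c n)" using h_Ck[OF n] by simp
  qed
  have P4: "\<forall>n\<ge>1. closure {\<gamma>. hseq c n \<gamma> \<noteq> 0} = {-1..-(c ^ n)} \<union> {c ^ n..1}
             \<and> (\<forall>\<gamma> \<in> {-1<..<-(c ^ n)} \<union> {c ^ n<..<1}. hseq c n \<gamma> > 0)"
    using hseq_h h_closure h_pos by simp
  have P5: "\<forall>n\<ge>1. Qn c n > 0" using Q_pos by simp
  have P6: "\<forall>n\<ge>2. \<forall>\<gamma>. \<gamma> \<noteq> 0 \<longrightarrow>
         1 / Qn c (n - 1) * (\<Sum>\<^sub>\<infinity>j::int. hseq c n (c powi j * \<gamma>)) = 1"
  proof (intro allI impI)
    fix n :: nat and \<gamma> :: real assume n: "n \<ge> 2" and g: "\<gamma> \<noteq> 0"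
    obtain m where nm: "n = Suc m" and m: "m \<ge> 1" using n by (cases n) auto
    show "1 / Qn c (n - 1) * (\<Sum>\<^sub>\<infinity>j::int. hseq c n (c powi j * \<gamma>)) = 1"
      using part_vi[OF m g] by (simp add: nm)
  qed
  have P7: "\<forall>n\<ge>2. \<exists>C>0. \<forall>\<gamma>. \<gamma> \<noteq> 0 \<longrightarrow>
         C \<le> 1 / (Qn c (n - 1))\<^sup>2 * (\<Sum>\<^sub>\<infinity>j::int. \<bar>hseq c n (c powi j * \<gamma>)\<bar>\<^sup>2)
       \<and> 1 / (Qn c (n - 1))\<^sup>2 * (\<Sum>\<^sub>\<infinity>j::int. \<bar>hseq c n (c powi j * \<gamma>)\<bar>\<^sup>2) \<le> 1"
  proof (intro allI impI)
    fix n :: nat assume n: "n \<ge> 2"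
    obtain m where nm: "n = Suc m" and m: "m \<ge> 1" using n by (cases n) auto
    show "\<exists>C>0. \<forall>\<gamma>. \<gamma> \<noteq> 0 \<longrightarrow>
         C \<le> 1 / (Qn c (n - 1))\<^sup>2 * (\<Sum>\<^sub>\<infinity>j::int. \<bar>hseq c n (c powi j * \<gamma>)\<bar>\<^sup>2)
       \<and> 1 / (Qn c (n - 1))\<^sup>2 * (\<Sum>\<^sub>\<infinity>j::int. \<bar>hseq c n (c powi j * \<gamma>)\<bar>\<^sup>2) \<le> 1"
    proof (intro exI[of _ "1 / real (2 * m + 1)"] conjI allI impI)
      show "0 < 1 / real (2 * m + 1)" by simp
      fix \<gamma> :: real assume g: "\<gamma> \<noteq> 0"
      show "1 / real (2 * m + 1) \<le> 1 / (Qn c (n - 1))\<^sup>2 * (\<Sum>\<^sub>\<infinity>j::int. \<bar>hseq c n (c powi j * \<gamma>)\<bar>\<^sup>2)"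
        using part_vii[OF m g] by (simp add: nm)
      show "1 / (Qn c (n - 1))\<^sup>2 * (\<Sum>\<^sub>\<infinity>j::int. \<bar>hseq c n (c powi j * \<gamma>)\<bar>\<^sup>2) \<le> 1"
        using part_vii[OF m g] by (simp add: nm)
    qed
  qed
  have P8: "\<forall>n\<ge>2. \<forall>\<gamma>. hseq c n \<gamma> = 2 / (real n - 1) *
         ((1 - \<bar>\<gamma>\<bar>) * hseq c (n - 1) \<gamma>
          + (\<bar>\<gamma>\<bar> / c - c ^ (n - 1)) * hseq c (n - 1) (\<gamma> / c))"
  proof (intro allI impI)
    fix n :: nat and \<gamma> :: real assume n: "n \<ge> 2"
    obtain m where nm: "n = Suc m" and m: "m \<ge> 1" using n by (cases n) auto
    have e1: "hseq c n = h (Suc m)" using hseq_h[of n] n by (simp add: nm)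
    have e2: "hseq c (n - 1) = h m" using hseq_h[OF m] by (simp add: nm)
    show "hseq c n \<gamma> = 2 / (real n - 1) *
         ((1 - \<bar>\<gamma>\<bar>) * hseq c (n - 1) \<gamma>
          + (\<bar>\<gamma>\<bar> / c - c ^ (n - 1)) * hseq c (n - 1) (\<gamma> / c))"
      unfolding e1 e2 using h_rec[OF m, of \<gamma>] by (simp add: nm)
  qed
  show ?thesis using P1 P2 P3 P4 P5 Q1 P6 P7 P8 by blast
qed

end
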